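(* Let $q\ge 2$ and $n,k\in\mathbb{N}$ with $2k\le n$. Suppose there is a function $b:\binom{[2k]}{k}\to A^n$ such that the sets $b(E)[E]$, for $E\in\binom{[2k]}{k}$, are pairwise disjoint. Then there exists $h\in F(n,q)$ having no trivial coordinate function and such that $\kappa^{\min}(h)\ge k$.
   Context: Let $q\ge 2$, $A=\{0,1,\dots,q-1\}$, $[n]=\{1,\dots,n\}$, and let $F(n,q)$ be the set of all maps $A^n\to A^n$. For $f\in F(m,q)$ and $i\in[m]$, $f_i$ is the $i$-th coordinate function and $f^i(x)=(x_1,\dots,x_{i-1},f_i(x),x_{i+1},\dots,x_m)$; for a word $w=(w_1,\dots,w_t)$ over $[m]$, $f^w=f^{w_t}\circ\cdots\circ f^{w_1}$. $\Pi([m])$ is the set of permutations of $[m]$ written as words $(w_1,\dots,w_m)$. $\mathrm{pr}_{[n]}:A^m\to A^n$ is the projection onto the first $n$ coordinates. For $m\ge n$, $(f,w)$ with $f\in F(m,q)$, $w\in\Pi([m])$ sequentializes $h\in F(n,q)$ if $\mathrm{pr}_{[n]}\circ f^w=h\circ\mathrm{pr}_{[n]}$. $\kappa^{\min}(h)$ is the smallest $k\ge 0$ such that there exist $f\in F(n+k,q)$ and $w\in\Pi([n+k])$ with $(f,w)$ sequentializing $h$. A coordinate function $h_i$ is trivial if $h_i(x)=x_i$ for all $x\in A^n$. For a set $I$, $\binom{I}{k}$ is the set of $k$-element subsets of $I$. For $x\in A^n$ and $I\subseteq[n]$, $x[I]=\{x'\in A^n : x'_j=x_j \text{ for all } j\in[n]\setminus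 I\}$. *)

theory Defs
  imports Main
begin

(* Coordinates are 0-indexed: the paper's [m] = {1..m} corresponds to {0..<m}.
   Points of A^m are lists of length m with entries in A = {0..<q}. *)

definition space :: "nat \<Rightarrow> nat \<Rightarrow> nat list set" where
  "space q m = {x. length x = m \<and> (\<forall>i<m. x ! i < q)}"

(* F(m,q): maps A^m -> A^m (only behaviour on A^m matters) *)
definition Fmaps :: "nat \<Rightarrow> nat \<Rightarrow> (nat list \<Rightarrow> nat list) set" where
  "Fmaps m q = {f. \<forall>x\<in>space q m. f x \<in> space q m}"

definition upd_coord :: "(nat list \<Rightarrow> nat list) \<Rightarrow> nat \<Rightarrow> nat list \<Rightarrow> nat list" where
  "upd_coord f i x = x[i := f x ! i]"

definition upd_word :: "(nat list \<Rightarrow> nat list) \<Rightarrow> nat list \<Rightarrow> nat list \<Rightarrow> nat list" where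
  "upd_word f w x = foldl (\<lambda>y i. upd_coord f i y) x w"

definition perm_words :: "nat \<Rightarrow> nat list set" where
  "perm_words m = {w. distinct w \<and> set w = {0..<m}}"

definition sequentializes ::
  "nat \<Rightarrow> nat \<Rightarrow> nat \<Rightarrow> (nat list \<Rightarrow> nat list) \<Rightarrow> nat list \<Rightarrow> (nat list \<Rightarrow> nat list) \<Rightarrow> bool" where
  "sequentializes q m n f w h \<longleftrightarrow>
     (\<forall>x\<in>space q m. take n (upd_word f w x) = h (take n x))"

definition kappa_min :: "nat \<Rightarrow> nat \<Rightarrow> (nat list \<Rightarrow> nat list) \<Rightarrow> nat" where
  "kappa_min q n h = (LEAST k. \<exists>f\<in>Fmaps (n + k) q. \<exists>w\<in>perm_words (n + k).
                         sequentializes q (n + k) n f w h)"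

definition trivial_coord :: "nat \<Rightarrow> nat \<Rightarrow> (nat list \<Rightarrow> nat list) \<Rightarrow> nat \<Rightarrow> bool" where
  "trivial_coord q n h i \<longleftrightarrow> (\<forall>x\<in>space q n. h x ! i = x ! i)"

definition box :: "nat \<Rightarrow> nat \<Rightarrow> nat list \<Rightarrow> nat set \<Rightarrow> nat list set" where
  "box q n x I = {x'\<in>space q n. \<forall>j<n. j \<notin> I \<longrightarrow> x' ! j = x ! j}"

end

theory Submission
  imports Defs "HOL-Library.FuncSet"
begin

lemma space_eq: "space q m = {xs. set xs \<subseteq> {0..<q} \<and> length xs = m}"
  unfolding space_def apply (auto simp: in_set_conv_nth) by (meson atLeastLessThan_iff nth_mem subsetD)

lemma finite_space: "finite (space q m)"
  unfolding space_eq by (rule finite_lists_length_eq) simp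

lemma card_space: "card (space q m) = q ^ m"
  unfolding space_eq by (simp add: card_lists_length_eq)

lemma upd_word_Cons: "upd_word f (a#w) x = upd_word f w (upd_coord f a x)"
  unfolding upd_word_def by simp

lemma upd_word_append: "upd_word f (u@v) x = upd_word f v (upd_word f u x)"
  unfolding upd_word_def by simp

lemma upd_word_snoc: "upd_word f (u@[a]) x = upd_coord f a (upd_word f u x)"
  unfolding upd_word_def by simp

lemma upd_word_Nil: "upd_word f [] x = x"
  unfolding upd_word_def by simp

lemma length_upd_word: "length (upd_word f w x) = length x"
  by (induction w arbitrary: x) (auto simp: upd_word_Cons upd_word_Nil upd_coord_def)

lemma upd_word_nth_notin: "i \<notin> set w \<Longrightarrow> upd_word f w x ! i = x ! i"
  by (induction w arbitrary: x) (auto simp: upd_word_Cons upd_word_Nil upd_coord_def)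

lemma upd_word_space:
  assumes "f \<in> Fmaps m q" "x \<in> space q m" "set w \<subseteq> {0..<m}"
  shows "upd_word f w x \<in> space q m"
  using assms(2,3)
proof (induction w arbitrary: x)
  case Nil then show ?case by (simp add: upd_word_Nil)
next
  case (Cons a w)
  have "f x \<in> space q m" using assms(1) Cons.prems unfolding Fmaps_def by auto
  then have "upd_coord f a x \<in> space q m" using Cons.prems
    unfolding upd_coord_def space_def by (auto simp: nth_list_update)
  then show ?case using Cons by (simp add: upd_word_Cons)
qed


lemma exists_seq:
  assumes g: "g \<in> Fmaps n q"
  shows "\<exists>f\<in>Fmaps (n+n) q. \<exists>w\<in>perm_words (n+n). sequentializes q (n+n) n f w g"
proof -
  define f where "f y = map (\<lambda>i. if i < n then g (drop n y) ! i else y ! (i - n)) [0..<n+n]" for y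
  have fF: "f \<in> Fmaps (n+n) q"
    unfolding Fmaps_def
  proof safe
    fix y assume y: "y \<in> space q (n+n)"
    then have "drop n y \<in> space q n" unfolding space_def by auto
    then have "g (drop n y) \<in> space q n" using g unfolding Fmaps_def by auto
    then show "f y \<in> space q (n+n)" using y unfolding f_def space_def by auto
  qed
  define w where "w = [n..<n+n] @ [0..<n]"
  have wP: "w \<in> perm_words (n+n)" unfolding w_def perm_words_def by auto
  have seq: "take n (upd_word f w x) = g (take n x)" if x: "x \<in> space q (n+n)" for x
  proof -
    have lx: "length x = n + n" using x unfolding space_def by auto
    have ph1: "\<forall>i<n+n. upd_word f [n..<n+j] x ! i = (if n \<le> i \<and> i < n+j then x!(i-n) else x!i)"
      if "j \<le> n" for j
      using that
    proof (induction j)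
      case 0 then show ?case by (simp add: upd_word_Nil)
    next
      case (Suc j)
      define s where "s = upd_word f [n..<n+j] x"
      have ls: "length s = n+n" unfolding s_def by (simp add: length_upd_word lx)
      have "[n..<n+Suc j] = [n..<n+j] @ [n+j]" by simp
      then have eq: "upd_word f [n..<n+Suc j] x = s[n+j := f s ! (n+j)]"
        unfolding s_def by (simp add: upd_word_snoc upd_coord_def)
      have "f s ! (n+j) = s ! j" using Suc.prems unfolding f_def by simp
      also have "\<dots> = x ! j" using Suc unfolding s_def by simp
      finally show ?case using Suc ls unfolding eq s_def[symmetric]
        by (auto simp: nth_list_update)
    qed
    define s0 where "s0 = upd_word f [n..<n+n] x"
    have s0: "\<forall>i<n+n. s0 ! i = (if n \<le> i then x!(i-n) else x!i)"
      using ph1[of n] unfolding s0_def by auto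
    have ls0: "length s0 = n+n" unfolding s0_def by (simp add: length_upd_word lx)
    have ds0: "drop n s0 = take n x"
      by (rule nth_equalityI) (use s0 ls0 lx in auto)
    have ph2: "length (upd_word f [0..<j] s0) = n+n \<and>
        (\<forall>i<n+n. upd_word f [0..<j] s0 ! i = (if i < j then g (take n x) ! i else s0!i))"
      if "j \<le> n" for j
      using that
    proof (induction j)
      case 0 then show ?case by (simp add: upd_word_Nil ls0)
    next
      case (Suc j)
      define s where "s = upd_word f [0..<j] s0"
      have ls: "length s = n+n" unfolding s_def by (simp add: length_upd_word ls0)
      have eq: "upd_word f [0..<Suc j] s0 = s[j := f s ! j]"
        unfolding s_def by (simp add: upd_word_snoc upd_coord_def)
      have "drop n s = drop n s0"
        by (rule nth_equalityI) (use Suc ls ls0 in \<open>auto simp: s_def\<close>)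
      then have "f s ! j = g (take n x) ! j" using Suc.prems unfolding f_def ds0 by simp
      then show ?case using Suc ls unfolding eq s_def[symmetric]
        by (auto simp: nth_list_update)
    qed
    have gx: "g (take n x) \<in> space q n"
      using g x unfolding Fmaps_def space_def by auto
    have "upd_word f w x = upd_word f [0..<n] s0"
      unfolding w_def s0_def by (simp add: upd_word_append)
    then show ?thesis using ph2[of n] gx
      by (intro nth_equalityI) (auto simp: space_def)
  qed
  show ?thesis using fF wP seq unfolding sequentializes_def by blast
qed


definition KS :: "nat \<Rightarrow> nat set set" where
  "KS k = {E. E \<subseteq> {0..<2*k} \<and> card E = k}"

definition sig :: "nat \<Rightarrow> nat set \<Rightarrow> nat \<Rightarrow> nat" where
  "sig k E = (SOME \<sigma>. bij_betw \<sigma> ({0..<2*k} - E) E)"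

definition hE :: "nat \<Rightarrow> nat \<Rightarrow> nat \<Rightarrow> (nat set \<Rightarrow> nat list) \<Rightarrow> nat set \<Rightarrow> nat list \<Rightarrow> nat list" where
  "hE q n k b E y = map (\<lambda>i. if i \<in> E then Suc (b E ! i) mod q
       else if i < 2*k then y ! sig k E i else Suc (y ! i) mod q) [0..<n]"

definition H :: "nat \<Rightarrow> nat \<Rightarrow> nat \<Rightarrow> (nat set \<Rightarrow> nat list) \<Rightarrow> nat list \<Rightarrow> nat list" where
  "H q n k b y = (if \<exists>E\<in>KS k. y \<in> box q n (b E) E
     then hE q n k b (SOME E. E \<in> KS k \<and> y \<in> box q n (b E) E) y
     else map (\<lambda>i. if i < 2*k then y ! i else Suc (y ! i) mod q) [0..<n])"

lemma sig_bij: assumes "E \<in> KS k" shows "bij_betw (sig k E) ({0..<2*k} - E) E"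
proof -
  have "card ({0..<2*k} - E) = card E"
    using assms unfolding KS_def
    by (subst card_Diff_subset) (auto intro: finite_subset)
  then obtain h where "bij_betw h ({0..<2*k} - E) E"
    using finite_same_card_bij[of "{0..<2*k} - E" E] assms unfolding KS_def
    by (auto intro: finite_subset)
  then show ?thesis unfolding sig_def by (rule someI[where P="\<lambda>\<sigma>. bij_betw \<sigma> _ _"])
qed

lemma suc_mod_neq: "(a::nat) < q \<Longrightarrow> 2 \<le> q \<Longrightarrow> Suc a mod q \<noteq> a"
  by (cases "Suc a = q") auto

lemma H_box:
  assumes dis: "\<And>E1 E2. E1\<in>KS k \<Longrightarrow> E2\<in>KS k \<Longrightarrow> E1\<noteq>E2 \<Longrightarrow> box q n (b E1) E1 \<inter> box q n (b E2) E2 = {}"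
    and E: "E \<in> KS k" and y: "y \<in> box q n (b E) E"
  shows "H q n k b y = hE q n k b E y"
proof -
  have ex: "\<exists>E. E \<in> KS k \<and> y \<in> box q n (b E) E" using E y by blast
  define E' where "E' = (SOME E. E \<in> KS k \<and> y \<in> box q n (b E) E)"
  have E': "E' \<in> KS k \<and> y \<in> box q n (b E') E'" unfolding E'_def by (rule someI_ex[OF ex])
  have "E' = E" using dis[of E' E] E' E y by auto
  then show ?thesis unfolding H_def using E y E'_def by auto
qed

lemma H_Fmaps:
  assumes dis: "\<And>E1 E2. E1\<in>KS k \<Longrightarrow> E2\<in>KS k \<Longrightarrow> E1\<noteq>E2 \<Longrightarrow> box q n (b E1) E1 \<inter> box q n (b E2) E2 = {}"
    and q: "q \<ge> 2" and kn: "2*k \<le> n"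
  shows "H q n k b \<in> Fmaps n q"
  unfolding Fmaps_def
proof safe
  fix y assume y: "y \<in> space q n"
  have q0: "0 < q" using q by simp
  show "H q n k b y \<in> space q n"
  proof (cases "\<exists>E\<in>KS k. y \<in> box q n (b E) E")
    case True
    then obtain E where E: "E \<in> KS k" "y \<in> box q n (b E) E" by blast
    have "hE q n k b E y \<in> space q n"
      unfolding hE_def space_def
    proof (auto simp: q0)
      fix i assume "i < n" "i \<notin> E" "i < 2*k"
      then have "sig k E i \<in> E" using sig_bij[OF E(1)] by (auto simp: bij_betw_def)
      then have "sig k E i < n" using E(1) kn unfolding KS_def by auto
      then show "y ! sig k E i < q" using y unfolding space_def by auto
    qed
    then show ?thesis using H_box[OF dis E] by simp
  next
    case False
    then show ?thesis using y q unfolding H_def space_def by auto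
  qed
qed

lemma H_nontriv:
  assumes dis: "\<And>E1 E2. E1\<in>KS k \<Longrightarrow> E2\<in>KS k \<Longrightarrow> E1\<noteq>E2 \<Longrightarrow> box q n (b E1) E1 \<inter> box q n (b E2) E2 = {}"
    and q: "q \<ge> 2" and kn: "2*k \<le> n"
    and bsp: "\<And>E. E \<in> KS k \<Longrightarrow> b E \<in> space q n"
    and i: "i < n"
  shows "\<not> trivial_coord q n (H q n k b) i"
proof (cases "i < 2*k")
  case True
  define E0 where "E0 = (if i < k then {0..<k} else {k..<2*k})"
  have E0: "E0 \<in> KS k" unfolding E0_def KS_def by auto
  have iE: "i \<in> E0" using True unfolding E0_def by auto
  have yb: "b E0 \<in> box q n (b E0) E0" using bsp[OF E0] unfolding box_def by auto
  have "H q n k b (b E0) ! i = Suc (b E0 ! i) mod q"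
    using H_box[OF dis E0 yb] iE i unfolding hE_def by simp
  moreover have "b E0 ! i < q" using bsp[OF E0] i unfolding space_def by auto
  ultimately show ?thesis using suc_mod_neq[OF _ q] bsp[OF E0] unfolding trivial_coord_def by force
next
  case False
  define y where "y = replicate n (0::nat)"
  have ysp: "y \<in> space q n" using q unfolding y_def space_def by auto
  have "H q n k b y ! i = Suc (y ! i) mod q"
  proof (cases "\<exists>E\<in>KS k. y \<in> box q n (b E) E")
    case True
    then obtain E where E: "E \<in> KS k" "y \<in> box q n (b E) E" by blast
    have "i \<notin> E" using E(1) False unfolding KS_def by auto
    then show ?thesis using H_box[OF dis E] i False unfolding hE_def by simp
  next
    case F: False
    then show ?thesis using i False unfolding H_def by simp
  qed
  moreover have "y ! i < q" using ysp i unfolding space_def by auto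
  ultimately show ?thesis using suc_mod_neq[OF _ q] ysp unfolding trivial_coord_def by force
qed


lemma nat_ivt:
  fixes c :: "nat \<Rightarrow> nat"
  assumes "c 0 = 0" "\<And>p. c (Suc p) \<le> Suc (c p)"
  shows "v \<le> c N \<Longrightarrow> \<exists>p\<le>N. c p = v"
proof (induction N)
  case 0 then show ?case using assms by auto
next
  case (Suc N)
  show ?case
  proof (cases "v \<le> c N")
    case True then show ?thesis using Suc.IH by (meson le_Suc_eq)
  next
    case False
    then have "v = c (Suc N)" using Suc.prems assms(2)[of N] by linarith
    then show ?thesis by blast
  qed
qed

lemma lower_bound:
  assumes dis: "\<And>E1 E2. E1\<in>KS k \<Longrightarrow> E2\<in>KS k \<Longrightarrow> E1\<noteq>E2 \<Longrightarrow> box q n (b E1) E1 \<inter> box q n (b E2) E2 = {}"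
    and q: "q \<ge> 2" and kn: "2*k \<le> n"
    and bsp: "\<And>E. E \<in> KS k \<Longrightarrow> b E \<in> space q n"
    and fF: "f \<in> Fmaps (n+k') q" and wP: "w \<in> perm_words (n+k')"
    and sq: "sequentializes q (n+k') n f w (H q n k b)"
  shows "k \<le> k'"
proof (rule ccontr)
  assume "\<not> k \<le> k'"
  then have kk: "k' < k" by simp
  define m where "m = n + k'"
  have dw: "distinct w" and sw: "set w = {0..<m}" using wP unfolding perm_words_def m_def by auto
  define cnt where "cnt p = card (set (take p w) \<inter> {0..<2*k})" for p
  have c0: "cnt 0 = 0" unfolding cnt_def by simp
  have cS: "cnt (Suc p) \<le> Suc (cnt p)" for p
  proof -
    have "set (take (Suc p) w) \<subseteq> insert (w ! p) (set (take p w))"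
      by (cases "p < length w") (auto simp: take_Suc_conv_app_nth)
    then have "set (take (Suc p) w) \<inter> {0..<2*k} \<subseteq> insert (w ! p) (set (take p w) \<inter> {0..<2*k})"
      by auto
    then have "cnt (Suc p) \<le> card (insert (w ! p) (set (take p w) \<inter> {0..<2*k}))"
      unfolding cnt_def by (intro card_mono) auto
    also have "\<dots> \<le> Suc (cnt p)" unfolding cnt_def by (simp add: card_insert_if)
    finally show ?thesis .
  qed
  have "cnt (length w) = 2*k" unfolding cnt_def using sw kn m_def
    by (simp add: Int_absorb1)
  then obtain p where "p \<le> length w" and cp: "cnt p = k"
    using nat_ivt[of cnt, OF c0 cS, of k "length w"] by auto
  define u where "u = take p w"
  define v where "v = drop p w"
  have wuv: "w = u @ v" unfolding u_def v_def by simp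
  have uv: "set u \<inter> set v = {}" using dw unfolding wuv by simp
  have su: "set u \<subseteq> {0..<m}" using sw unfolding wuv by auto
  define E where "E = set u \<inter> {0..<2*k}"
  define C where "C = {0..<2*k} - E"
  have EK: "E \<in> KS k" using cp unfolding KS_def E_def cnt_def u_def by auto
  have Cu: "C \<inter> set u = {}" unfolding C_def E_def by auto
  define \<sigma> where "\<sigma> = sig k E"
  have bij: "bij_betw \<sigma> C E" unfolding \<sigma>_def C_def by (rule sig_bij[OF EK])
  define B where "B = box q n (b E) E"
  have bE: "b E \<in> B" using bsp[OF EK] unfolding B_def box_def by auto
  define \<phi> where "\<phi> y = upd_word f u (y @ replicate k' 0)" for y
  have xsp: "y @ replicate k' 0 \<in> space q m" if "y \<in> B" for y
    using that q unfolding B_def box_def space_def m_def by (auto simp: nth_append)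
  have \<phi>sp: "\<phi> y \<in> space q m" if "y \<in> B" for y
    unfolding \<phi>_def m_def using upd_word_space[OF fF xsp[OF that, unfolded m_def] su[unfolded m_def]] .
  have fin: "take n (upd_word f v (\<phi> y)) = hE q n k b E y" if y: "y \<in> B" for y
  proof -
    have "take n (upd_word f w (y @ replicate k' 0)) = H q n k b (take n (y @ replicate k' 0))"
      using sq xsp[OF y] unfolding sequentializes_def m_def by auto
    moreover have "length y = n" using y unfolding B_def box_def space_def by auto
    ultimately show ?thesis using H_box[OF dis EK y[unfolded B_def]]
      unfolding \<phi>_def wuv upd_word_append by simp
  qed
  have lphi: "length (\<phi> y) = m" if "y \<in> B" for y using \<phi>sp[OF that] unfolding space_def by auto
  have A1: "\<phi> y ! i = hE q n k b E y ! i" if "y \<in> B" "i < n" "i \<in> set u" for y i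
  proof -
    have "\<phi> y ! i = upd_word f v (\<phi> y) ! i" proof -
      have "i \<notin> set v" using that uv by auto
      then show ?thesis by (simp add: upd_word_nth_notin)
    qed
    also have "\<dots> = take n (upd_word f v (\<phi> y)) ! i" using that by simp
    finally show ?thesis using fin[OF that(1)] by simp
  qed
  have A2: "\<phi> y ! i = y ! i" if "y \<in> B" "i < n" "i \<notin> set u" for y i
  proof -
    have "length y = n" using that unfolding B_def box_def space_def by auto
    then show ?thesis using that unfolding \<phi>_def by (simp add: upd_word_nth_notin nth_append)
  qed
  define S where "S = {s \<in> space q m. take n s = take n (\<phi> (b E))}"
  have phiS: "\<phi> y \<in> S" if y: "y \<in> B" for y
  proof -
    have "take n (\<phi> y) = take n (\<phi> (b E))"
    proof (rule nth_equalityI)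
      show "length (take n (\<phi> y)) = length (take n (\<phi> (b E)))" using lphi y bE by simp
    next
      fix i assume "i < length (take n (\<phi> y))"
      then have i: "i < n" using lphi[OF y] m_def by simp
      have yi: "i \<notin> E \<Longrightarrow> y ! i = b E ! i" using y i unfolding B_def box_def by auto
      show "take n (\<phi> y) ! i = take n (\<phi> (b E)) ! i"
      proof (cases "i \<in> set u")
        case True
        then have "i \<notin> C" using Cu by auto
        then have "hE q n k b E y ! i = hE q n k b E (b E) ! i"
          using i yi unfolding hE_def C_def by auto
        then show ?thesis using A1[OF y i True] A1[OF bE i True] i by simp
      next
        case False
        then have "i \<notin> E" unfolding E_def by auto
        then show ?thesis using A2[OF y i False] A2[OF bE i False] i yi by simp
      qed
    qed
    then show ?thesis unfolding S_def using \<phi>sp[OF y] by simp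
  qed
  define G where "G s = restrict (\<lambda>c. upd_word f v s ! c) C" for s
  have Gphi: "G (\<phi> y) = restrict (\<lambda>c. y ! \<sigma> c) C" if y: "y \<in> B" for y
  proof -
    have "upd_word f v (\<phi> y) ! c = y ! \<sigma> c" if c: "c \<in> C" for c
    proof -
      have cn: "c < n" "c < 2*k" "c \<notin> E" using c kn unfolding C_def by auto
      have "upd_word f v (\<phi> y) ! c = take n (upd_word f v (\<phi> y)) ! c" using cn by simp
      also have "\<dots> = hE q n k b E y ! c" using fin[OF y] by simp
      also have "\<dots> = y ! \<sigma> c" using cn unfolding hE_def \<sigma>_def by simp
      finally show ?thesis .
    qed
    then show ?thesis unfolding G_def by (auto intro: restrict_ext)
  qed
  have PiE_sub: "PiE C (\<lambda>_. {0..<q}) \<subseteq> G ` S"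
  proof
    fix g assume g: "g \<in> PiE C (\<lambda>_. {0..<q})"
    define y where "y = map (\<lambda>i. if i \<in> E then g (inv_into C \<sigma> i) else b E ! i) [0..<n]"
    have invC: "inv_into C \<sigma> i \<in> C" if "i \<in> E" for i
      using bij that by (metis bij_betw_def inv_into_into)
    have yB: "y \<in> B"
      unfolding B_def box_def space_def y_def
    proof (auto)
      fix i assume "i < n" "i \<in> E"
      then show "g (inv_into C \<sigma> i) < q" using g invC by auto
    next
      fix i assume "i < n" "i \<notin> E"
      then show "b E ! i < q" using bsp[OF EK] unfolding space_def by auto
    qed
    have "restrict (\<lambda>c. y ! \<sigma> c) C = g"
    proof
      fix c show "restrict (\<lambda>c. y ! \<sigma> c) C c = g c"
      proof (cases "c \<in> C")
        case True
        have sE: "\<sigma> c \<in> E" using bij True by (auto simp: bij_betw_def)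
        then have "\<sigma> c < n" using EK kn unfolding KS_def by auto
        then have "y ! \<sigma> c = g (inv_into C \<sigma> (\<sigma> c))" using sE unfolding y_def by simp
        also have "\<dots> = g c" using bij True by (simp add: bij_betw_def)
        finally show ?thesis using True by simp
      next
        case False then show ?thesis using g by auto
      qed
    qed
    then show "g \<in> G ` S" using Gphi[OF yB] phiS[OF yB] by (metis image_eqI)
  qed
  have finS: "finite S" by (rule finite_subset[OF _ finite_space[of q m]]) (auto simp: S_def)
  have "card (PiE C (\<lambda>_. {0..<q})) = q ^ k"
  proof -
    have cC: "card C = k" using EK unfolding C_def KS_def
      by (subst card_Diff_subset) (auto intro: finite_subset)
    have "finite C" unfolding C_def by simp
    then show ?thesis using cC by (simp add: card_PiE)
  qed
  then have "q ^ k \<le> card (G ` S)" using PiE_sub finS by (metis card_mono finite_imageI)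
  also have "\<dots> \<le> card S" using finS by (rule card_image_le)
  also have "\<dots> \<le> card (space q k')"
  proof (rule card_inj_on_le[where f="drop n"])
    show "inj_on (drop n) S"
    proof
      fix s s' assume "s \<in> S" "s' \<in> S" "drop n s = drop n s'"
      then have "take n s = take n s'" unfolding S_def by simp
      then show "s = s'" using \<open>drop n s = drop n s'\<close> by (metis append_take_drop_id)
    qed
    show "drop n ` S \<subseteq> space q k'"
    proof
      fix z assume "z \<in> drop n ` S"
      then obtain s where s: "s \<in> space q m" "z = drop n s" unfolding S_def by auto
      have ls: "length s = n + k'" and sq: "\<forall>i<n+k'. s ! i < q" using s(1) unfolding space_def m_def by auto
      show "z \<in> space q k'" unfolding space_def s(2) using ls sq by auto
    qed
    show "finite (space q k')" by (rule finite_space)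
  qed
  also have "\<dots> = q ^ k'" by (rule card_space)
  finally have "q ^ k \<le> q ^ k'" .
  moreover have "q ^ k' < q ^ k" using kk q by (intro power_strict_increasing) auto
  ultimately show False by simp
qed


theorem mainTheorem4:
  fixes q n k :: nat and b :: "nat set \<Rightarrow> nat list"
  assumes "q \<ge> 2" and "2 * k \<le> n"
    and "\<forall>E. E \<subseteq> {0..<2*k} \<and> card E = k \<longrightarrow> b E \<in> space q n"
    and "\<forall>E1 E2. E1 \<subseteq> {0..<2*k} \<and> card E1 = k \<and> E2 \<subseteq> {0..<2*k} \<and> card E2 = k
            \<and> E1 \<noteq> E2 \<longrightarrow> box q n (b E1) E1 \<inter> box q n (b E2) E2 = {}"
  shows "\<exists>h\<in>Fmaps n q. (\<forall>i<n. \<not> trivial_coord q n h i) \<and> kappa_min q n h \<ge> k"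
proof -
  have dis: "\<And>E1 E2. E1\<in>KS k \<Longrightarrow> E2\<in>KS k \<Longrightarrow> E1\<noteq>E2 \<Longrightarrow> box q n (b E1) E1 \<inter> box q n (b E2) E2 = {}"
    using assms(4) unfolding KS_def by blast
  have bsp: "\<And>E. E \<in> KS k \<Longrightarrow> b E \<in> space q n" using assms(3) unfolding KS_def by blast
  have HF: "H q n k b \<in> Fmaps n q" by (rule H_Fmaps[OF dis assms(1,2)])
  have nt: "\<forall>i<n. \<not> trivial_coord q n (H q n k b) i"
    using H_nontriv[OF dis assms(1,2) bsp] by blast
  define P where "P k' = (\<exists>f\<in>Fmaps (n + k') q. \<exists>w\<in>perm_words (n + k').
                         sequentializes q (n + k') n f w (H q n k b))" for k'
  have "P n" unfolding P_def by (rule exists_seq[OF HF])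
  then have "P (Least P)" by (rule LeastI)
  then have "k \<le> Least P" unfolding P_def
    using lower_bound[OF dis assms(1,2) bsp] by blast
  then have "k \<le> kappa_min q n (H q n k b)" unfolding kappa_min_def P_def by simp
  then show ?thesis using HF nt by blast
qed

end
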